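(* Let $F:\mathbb{R}^n\to\mathbb{R}^m$ be continuous and $C:\mathbb{R}^n\rightrightarrows\mathbb{R}^m$ have closed graph. Define $\varSigma(u):=F(u)+C(u)$, $\mathcal{C}(u):=(-u,F(u))+\mathrm{gph}\,C$ (a map $\mathbb{R}^n\rightrightarrows\mathbb{R}^n\times\mathbb{R}^m$), $Q(u,y):=(F(u)+y)+\varDelta_{\mathrm{gph}\,C}(u,y)$ (a map $\mathbb{R}^n\times\mathbb{R}^m\rightrightarrows\mathbb{R}^m$), and $\mathcal{Q}(u,\sigma,y):=(-u+\sigma,F(u)+y)+\varDelta_{\mathrm{gph}\,C}(\sigma,y)$ (a map $\mathbb{R}^n\times\mathbb{R}^n\times\mathbb{R}^m\rightrightarrows\mathbb{R}^n\times\mathbb{R}^m$). Let $(\bar u,\bar y)\in\mathrm{gph}\,C$ and assume $F$ is strictly differentiable at $\bar u$. Then the numbers $R_\varSigma:=\mathrm{Reg}(\bar u,F(\bar u)+\bar y;\varSigma)$, $R_{\mathcal{C}}:=\mathrm{Reg}(\bar u,(0,F(\bar u)+\bar y);\mathcal{C})$, $R_Q:=\mathrm{Reg}((\bar u,\bar y),F(\bar u)+\bar y;Q)$, $R_{\mathcal{Q}}:=\mathrm{Reg}((\bar u,\bar u,\bar y),(0,F(\bar u)+\bar y);\mathcal{Q})$ are well defined and satisfy $R_\varSigma\ge\max\{R_{\mathcal{C}},R_Q\}\ge R_{\mathcal{Q}}\ge0$. Moreover, $R_{\mathcal{Q}}=0$ implies $R_\varSigma=R_{\mathcal{C}}=R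_Q=0$.
   Context: For a set $\Omega$, the indicator mapping is $\varDelta_\Omega(x):=\{0\}$ if $x\in\Omega$ and $\emptyset$ otherwise. The polar of a cone $K$ is $K^\circ:=\{v\mid v^\top w\le0\ \forall w\in K\}$; the tangent cone is $T_{C_0}(x):=\limsup_{\tau\searrow0}(C_0-x)/\tau$; the (limiting) normal cone is $N_{C_0}(\bar x):=\limsup_{x\to\bar x,\,x\in C_0}T_{C_0}(x)^\circ$ (Painlevé–Kuratowski outer limits), $N_{C_0}(\bar x):=\emptyset$ if $\bar x\notin C_0$. The coderivative of $S:\mathbb{R}^a\rightrightarrows\mathbb{R}^b$ at $(\bar x,\bar y)\in\mathrm{gph}\,S$ is $D^*S(\bar x|\bar y)(z):=\{v\mid(v,-z)\in N_{\mathrm{gph}\,S}(\bar x,\bar y)\}$. For $S$ with closed graph, $\mathrm{Reg}(u,y;S):=\inf_{\|z\|=1}\mathrm{dist}[0,D^*S(u|y)(z)]$ if $(u,y)\in\mathrm{gph}\,S$ and $:=\infty$ otherwise (with $\mathrm{dist}[0,\emptyset]=\infty$). *)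

theory Defs
  imports "HOL-Analysis.Analysis" "HOL-Library.Extended_Real"
begin

text \<open>Set-valued maps S : 'a =>> 'b are rendered as functions 'a => 'b set.\<close>

definition gph :: "('a \<Rightarrow> 'b set) \<Rightarrow> ('a \<times> 'b) set" where
  "gph S = {(x, y). y \<in> S x}"

definition indicator_map :: "'a set \<Rightarrow> 'a \<Rightarrow> 'b::zero set" where
  "indicator_map \<Omega> x = (if x \<in> \<Omega> then {0} else {})"

definition PK_limsup :: "('a::metric_space \<Rightarrow> 'b::metric_space set) \<Rightarrow> 'a set \<Rightarrow> 'a \<Rightarrow> 'b set" where
  "PK_limsup S D a = {v. \<exists>x u. (\<forall>k. x k \<in> D \<and> u k \<in> S (x k)) \<and> x \<longlonglongrightarrow> a \<and> u \<longlonglongrightarrow> v}"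

definition polar_cone :: "'a::real_inner set \<Rightarrow> 'a set" where
  "polar_cone K = {v. \<forall>w\<in>K. inner v w \<le> 0}"

definition tangent_cone :: "'a::real_normed_vector set \<Rightarrow> 'a \<Rightarrow> 'a set" where
  "tangent_cone C0 x = PK_limsup (\<lambda>\<tau>::real. (\<lambda>c. (1 / \<tau>) *\<^sub>R (c - x)) ` C0) {0<..} 0"

definition normal_cone :: "'a::real_inner set \<Rightarrow> 'a \<Rightarrow> 'a set" where
  "normal_cone C0 xb = (if xb \<in> C0 then PK_limsup (\<lambda>x. polar_cone (tangent_cone C0 x)) C0 xb else {})"

definition coderiv :: "('a::real_inner \<Rightarrow> 'b::real_inner set) \<Rightarrow> 'a \<Rightarrow> 'b \<Rightarrow> 'b \<Rightarrow> 'a set" where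
  "coderiv S xb yb z = {v. (v, - z) \<in> normal_cone (gph S) (xb, yb)}"

text \<open>dist[0,A] as an extended real; the infimum over the empty set is infinity.\<close>
definition dist0 :: "'a::real_normed_vector set \<Rightarrow> ereal" where
  "dist0 A = (INF a\<in>A. ereal (norm a))"

definition Reg :: "'a::real_inner \<Rightarrow> 'b::real_inner \<Rightarrow> ('a \<Rightarrow> 'b set) \<Rightarrow> ereal" where
  "Reg u y S = (if (u, y) \<in> gph S then (INF z\<in>{z. norm z = 1}. dist0 (coderiv S u y z)) else \<infinity>)"

definition strictly_differentiable_at :: "('a::real_normed_vector \<Rightarrow> 'b::real_normed_vector) \<Rightarrow> 'a \<Rightarrow> bool" where
  "strictly_differentiable_at F ub \<longleftrightarrow> (\<exists>A. linear A \<and> (\<forall>\<epsilon>>0. \<exists>\<delta>>0. \<forall>x\<in>ball ub \<delta>. \<forall>x'\<in>ball ub \<delta>.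
      norm (F x - F x' - A (x - x')) \<le> \<epsilon> * norm (x - x')))"

end

theory Submission
  imports Defs
begin


lemma norm_diff_sq: "norm (a - b)^2 = norm a^2 - 2 * inner a b + norm (b::'a::real_inner)^2"
  by (simp add: power2_norm_eq_inner inner_diff_left inner_diff_right inner_commute)

lemma prox_polar:
  fixes S :: "'a::real_inner set"
  assumes "p \<in> S" "\<forall>c\<in>S. norm (y - p) \<le> norm (y - c)" "s \<ge> 0"
  shows "s *\<^sub>R (y - p) \<in> polar_cone (tangent_cone S p)"
proof -
  { fix w assume "w \<in> tangent_cone S p"
    then obtain \<tau> z where tz: "\<forall>k. \<tau> k \<in> {0<..} \<and> z k \<in> (\<lambda>c. (1/\<tau> k) *\<^sub>R (c - p)) ` S"
        "\<tau> \<longlonglongrightarrow> 0" "z \<longlonglongrightarrow> w"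
      unfolding tangent_cone_def PK_limsup_def by blast
    have ineq: "2 * inner (y - p) (z k) \<le> \<tau> k * (norm (z k))^2" for k
    proof -
      obtain c where c: "c \<in> S" "z k = (1/\<tau> k) *\<^sub>R (c - p)" using tz(1) by blast
      have tpos: "\<tau> k > 0" using tz(1) by auto
      have cp: "c - p = \<tau> k *\<^sub>R z k" using c(2) tpos by simp
      have "norm (y-p)^2 \<le> norm (y - c)^2" using assms(2) c(1) by (simp add: power_mono)
      also have "y - c = (y - p) - (c - p)" by simp
      finally have "norm (y-p)^2 \<le> norm (y-p)^2 - 2 * inner (y-p) (c-p) + norm (c-p)^2"
        by (simp only: norm_diff_sq)
      hence "2 * inner (y-p) (c-p) \<le> norm (c-p)^2" by simp
      hence "\<tau> k * (2 * inner (y-p) (z k)) \<le> \<tau> k * (\<tau> k * (norm (z k))^2)"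
        unfolding cp using tpos by (simp add: power2_eq_square algebra_simps)
      thus ?thesis using tpos by simp
    qed
    have l1: "(\<lambda>k. 2 * inner (y-p) (z k)) \<longlonglongrightarrow> 2 * inner (y-p) w" by (intro tendsto_intros tz(3))
    have l2: "(\<lambda>k. \<tau> k * (norm (z k))^2) \<longlonglongrightarrow> 0 * (norm w)^2" by (intro tendsto_intros tz)
    have "2 * inner (y-p) w \<le> 0 * (norm w)^2"
      by (rule LIMSEQ_le[OF l1 l2]) (use ineq in auto)
    hence "inner (s *\<^sub>R (y-p)) w \<le> 0" using assms(3) by (simp add: mult_nonneg_nonpos) }
  thus ?thesis unfolding polar_cone_def by auto
qed



lemma dist_suc_tendsto:
  fixes c :: "nat \<Rightarrow> 'a::metric_space"
  assumes "\<And>k. dist (c k) y < 1 / real (Suc k)"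
  shows "c \<longlonglongrightarrow> y"
proof -
  have "(\<lambda>k. dist (c k) y) \<longlonglongrightarrow> 0"
  proof (rule tendsto_sandwich[of "\<lambda>_. 0" _ _ "\<lambda>k. inverse (real (Suc k))"])
    show "\<forall>\<^sub>F n in sequentially. 0 \<le> dist (c n) y" by simp
    show "\<forall>\<^sub>F n in sequentially. dist (c n) y \<le> inverse (real (Suc n))"
      using assms by (simp add: divide_inverse less_imp_le)
  qed (insert LIMSEQ_inverse_real_of_nat, simp_all)
  thus ?thesis using tendsto_dist_iff by blast
qed

lemma polar_frechet:
  fixes S :: "'a::euclidean_space set"
  assumes v: "v \<in> polar_cone (tangent_cone S y)" and e: "\<epsilon> > 0"
  shows "\<exists>\<delta>>0. \<forall>c\<in>S. dist c y < \<delta> \<longrightarrow> inner v (c - y) \<le> \<epsilon> * norm (c - y)"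
proof (rule ccontr)
  assume "\<not> ?thesis"
  hence "\<forall>k::nat. \<exists>c\<in>S. dist c y < 1/real (Suc k) \<and> inner v (c-y) > \<epsilon> * norm (c-y)"
    by (auto simp: not_le)
  hence ex: "\<forall>k::nat. \<exists>c. c \<in> S \<and> dist c y < 1/real (Suc k) \<and> inner v (c-y) > \<epsilon> * norm (c-y)" by blast
  obtain c where c: "\<And>k. c k \<in> S" "\<And>k. dist (c k) y < 1/real (Suc k)"
     "\<And>k. inner v (c k - y) > \<epsilon> * norm (c k - y)"
    using choice[OF ex] by blast
  have ne: "c k \<noteq> y" for k using c(3)[of k] by auto
  define w where "w k = (1 / norm (c k - y)) *\<^sub>R (c k - y)" for k
  have ws: "\<forall>k. w k \<in> sphere 0 1" using ne by (simp add: w_def)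
  obtain l r where l: "l \<in> sphere 0 1" "strict_mono r" "(w \<circ> r) \<longlonglongrightarrow> l"
    using seq_compactE[OF compact_imp_seq_compact[OF compact_sphere] ws] by blast
  have cy: "c \<longlonglongrightarrow> y" by (rule dist_suc_tendsto) (use c(2) in auto)
  have "(\<lambda>k. norm (c k - y)) \<longlonglongrightarrow> norm (y - y)" by (intro tendsto_intros cy)
  hence t0: "(\<lambda>k. norm (c (r k) - y)) \<longlonglongrightarrow> 0"
    using LIMSEQ_subseq_LIMSEQ[OF _ l(2), of "\<lambda>k. norm (c k - y)"] by (simp add: comp_def)
  have "l \<in> tangent_cone S y"
    unfolding tangent_cone_def PK_limsup_def
  proof (intro CollectI exI[of _ "\<lambda>k. norm (c (r k) - y)"] exI[of _ "w \<circ> r"] conjI allI)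
    fix k
    show "norm (c (r k) - y) \<in> {0<..}" using ne by simp
    show "(w \<circ> r) k \<in> (\<lambda>q. (1 / norm (c (r k) - y)) *\<^sub>R (q - y)) ` S"
      using c(1) by (auto simp: w_def)
  next
    show "(\<lambda>k. norm (c (r k) - y)) \<longlonglongrightarrow> 0" by (rule t0)
  next
    show "(w \<circ> r) \<longlonglongrightarrow> l" by (rule l(3))
  qed
  hence le0: "inner v l \<le> 0" using v unfolding polar_cone_def by auto
  have gt: "inner v ((w \<circ> r) k) \<ge> \<epsilon>" for k
  proof -
    have N: "norm (c (r k) - y) > 0" using ne by simp
    have "inner v ((w \<circ> r) k) = inner v (c (r k) - y) / norm (c (r k) - y)"
      unfolding w_def comp_def inner_scaleR_right by simp
    thus ?thesis using c(3)[of "r k"] N by (simp add: le_divide_eq)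
  qed
  have L: "(\<lambda>k. inner v ((w \<circ> r) k)) \<longlonglongrightarrow> inner v l" by (intro tendsto_intros l(3))
  have "\<epsilon> \<le> inner v l"
    by (rule LIMSEQ_le[OF tendsto_const L]) (use gt in auto)
  thus False using le0 e by simp
qed

lemma frechet_prox:
  fixes S :: "'a::euclidean_space set"
  assumes S: "closed S" "x \<in> S" and d: "\<delta> > 0" and eta: "\<eta> \<ge> 0" and r: "r > 0"
    and fr: "\<forall>c\<in>S. dist c x < \<delta> \<longrightarrow> inner v (c - x) \<le> \<eta> * norm (c - x)"
  shows "\<exists>p\<in>S. \<exists>u\<in>polar_cone (tangent_cone S p). dist p x < r \<and> dist u v \<le> 2 * \<eta>"
proof -
  define t where "t = min (\<delta> / (4 * norm v + 4)) (r / (4 * \<eta> + 4))"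
  have t0: "t > 0" using d r eta by (auto simp: t_def intro!: divide_pos_pos add_nonneg_pos)
  have pv: "4 * norm v + 4 > 0" by (simp add: add_nonneg_pos)
  have pe: "4 * \<eta> + 4 > 0" using eta by simp
  have "t \<le> \<delta> / (4 * norm v + 4)" unfolding t_def by simp
  hence t1: "t * (4 * norm v + 4) \<le> \<delta>" using pos_le_divide_eq[OF pv] by simp
  have "t \<le> r / (4 * \<eta> + 4)" unfolding t_def by simp
  hence t2: "t * (4 * \<eta> + 4) \<le> r" using pos_le_divide_eq[OF pe] by simp
  have tv: "t * norm v \<ge> 0" using t0 by simp
  have te: "t * \<eta> \<ge> 0" using t0 eta by simp
  have e1: "t * (4 * norm v + 4) = 4 * (t * norm v) + 4 * t" by (simp add: algebra_simps)
  have e2: "t * (4 * \<eta> + 4) = 4 * (t * \<eta>) + 4 * t" by (simp add: algebra_simps)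
  define y where "y = x + t *\<^sub>R v"
  obtain p where p: "p \<in> S" "\<And>c. c \<in> S \<Longrightarrow> dist y p \<le> dist y c"
    using distance_attains_inf[OF S(1), of y] S(2) by blast
  have pc: "\<forall>c\<in>S. norm (y - p) \<le> norm (y - c)" using p(2) by (simp add: dist_norm)
  have yx: "norm (y - x) = t * norm v" using t0 by (simp add: y_def)
  have "norm (y - p) \<le> t * norm v" using pc S(2) yx by auto
  have "norm (p - x) \<le> norm (p - y) + norm (y - x)" using norm_triangle_ineq[of "p - y" "y - x"] by simp
  also have "\<dots> \<le> 2 * t * norm v" using \<open>norm (y - p) \<le> t * norm v\<close> yx by (simp add: norm_minus_commute)
  finally have px: "norm (p - x) \<le> 2 * t * norm v" .
  have "2 * t * norm v < \<delta>" using t1 t0 tv e1 by linarith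
  hence "dist p x < \<delta>" using px by (simp add: dist_norm)
  hence ip: "inner v (p - x) \<le> \<eta> * norm (p - x)" using fr p(1) by auto
  have "norm (y - p)^2 \<le> norm (y - x)^2" using pc S(2) by (simp add: power_mono)
  moreover have "y - p = t *\<^sub>R v - (p - x)" by (simp add: y_def)
  moreover have "y - x = t *\<^sub>R v" by (simp add: y_def)
  ultimately have "norm (t *\<^sub>R v)^2 - 2 * inner (t *\<^sub>R v) (p - x) + norm (p - x)^2 \<le> norm (t *\<^sub>R v)^2"
    by (simp only: norm_diff_sq)
  hence "norm (p - x)^2 \<le> 2 * t * inner v (p - x)" by simp
  also have "\<dots> \<le> 2 * t * (\<eta> * norm (p - x))" using ip t0 by simp
  finally have sq: "norm (p - x) * norm (p - x) \<le> (2 * t * \<eta>) * norm (p - x)"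
    by (simp add: power2_eq_square algebra_simps)
  have pxe: "norm (p - x) \<le> 2 * t * \<eta>"
  proof (cases "norm (p - x) = 0")
    case True thus ?thesis using t0 eta by simp
  next
    case False thus ?thesis using sq by (simp add: mult_le_cancel_right)
  qed
  have "2 * t * \<eta> < r" using t2 t0 te e2 by linarith
  hence dpx: "dist p x < r" using pxe by (simp add: dist_norm)
  define u where "u = (1/t) *\<^sub>R (y - p)"
  have u: "u \<in> polar_cone (tangent_cone S p)" unfolding u_def
    by (rule prox_polar[OF p(1) pc]) (use t0 in simp)
  have "u - v = (1/t) *\<^sub>R (x - p)" using t0 by (simp add: u_def y_def algebra_simps)
  hence "dist u v = norm (p - x) / t" using t0 by (simp add: dist_norm norm_minus_commute)
  also have "\<dots> \<le> 2 * \<eta>" using pxe t0 by (simp add: divide_le_eq mult_ac)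
  finally show ?thesis using p(1) u dpx by blast
qed



lemma NC2:
  assumes "v \<in> normal_cone S xb"
  shows "xb \<in> S \<and> (\<forall>e>0. \<exists>p\<in>S. \<exists>u\<in>polar_cone (tangent_cone S p). dist p xb < e \<and> dist u v < e)"
proof -
  have xb: "xb \<in> S" using assms by (auto simp: normal_cone_def split: if_splits)
  then obtain x u where xu: "\<forall>k. x k \<in> S \<and> u k \<in> polar_cone (tangent_cone S (x k))"
    "x \<longlonglongrightarrow> xb" "u \<longlonglongrightarrow> v"
    using assms by (auto simp: normal_cone_def PK_limsup_def)
  { fix e :: real assume e: "e > 0"
    have "\<forall>\<^sub>F k in sequentially. dist (x k) xb < e \<and> dist (u k) v < e"
      using tendstoD[OF xu(2) e] tendstoD[OF xu(3) e] by (rule eventually_conj)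
    then obtain N where "\<forall>k\<ge>N. dist (x k) xb < e \<and> dist (u k) v < e"
      by (auto simp: eventually_sequentially)
    hence "\<exists>p\<in>S. \<exists>u\<in>polar_cone (tangent_cone S p). dist p xb < e \<and> dist u v < e"
      using xu(1) by blast }
  thus ?thesis using xb by blast
qed

lemma NC_intro:
  assumes "xb \<in> S" "\<forall>k. x k \<in> S \<and> u k \<in> polar_cone (tangent_cone S (x k))"
    "x \<longlonglongrightarrow> xb" "u \<longlonglongrightarrow> v"
  shows "v \<in> normal_cone S xb"
  using assms unfolding normal_cone_def PK_limsup_def by auto

lemma NC1:
  assumes "xb \<in> S" "\<forall>e>0. \<exists>p\<in>S. \<exists>u\<in>polar_cone (tangent_cone S p). dist p xb < e \<and> dist u v < e"
  shows "v \<in> normal_cone S xb"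
proof -
  have "\<forall>k::nat. \<exists>pu. fst pu \<in> S \<and> snd pu \<in> polar_cone (tangent_cone S (fst pu)) \<and>
      dist (fst pu) xb < 1 / real (Suc k) \<and> dist (snd pu) v < 1 / real (Suc k)"
  proof
    fix k :: nat
    have "1 / real (Suc k) > 0" by simp
    then obtain p u where "p \<in> S" "u \<in> polar_cone (tangent_cone S p)" "dist p xb < 1 / real (Suc k)"
      "dist u v < 1 / real (Suc k)" using assms(2) by blast
    thus "\<exists>pu. fst pu \<in> S \<and> snd pu \<in> polar_cone (tangent_cone S (fst pu)) \<and>
      dist (fst pu) xb < 1 / real (Suc k) \<and> dist (snd pu) v < 1 / real (Suc k)"
      by (intro exI[of _ "(p, u)"]) simp
  qed
  then obtain f where f: "\<And>k. fst (f k) \<in> S \<and> snd (f k) \<in> polar_cone (tangent_cone S (fst (f k))) \<and>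
      dist (fst (f k)) xb < 1 / real (Suc k) \<and> dist (snd (f k)) v < 1 / real (Suc k)"
    using choice by metis
  have "(\<lambda>k. fst (f k)) \<longlonglongrightarrow> xb" by (rule dist_suc_tendsto) (use f in blast)
  moreover have "(\<lambda>k. snd (f k)) \<longlonglongrightarrow> v" by (rule dist_suc_tendsto) (use f in blast)
  ultimately show ?thesis using assms(1) f by (intro NC_intro[of xb S "\<lambda>k. fst (f k)" "\<lambda>k. snd (f k)"]) auto
qed

lemma polar_scale:
  assumes "u \<in> polar_cone K" "t \<ge> 0"
  shows "t *\<^sub>R u \<in> polar_cone K"
  using assms by (auto simp: polar_cone_def mult_nonneg_nonpos)

lemma NC_scale:
  assumes "v \<in> normal_cone S xb" "t \<ge> 0"
  shows "t *\<^sub>R v \<in> normal_cone S xb"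
proof -
  have xb: "xb \<in> S" using assms by (auto simp: normal_cone_def split: if_splits)
  then obtain x u where xu: "\<forall>k. x k \<in> S \<and> u k \<in> polar_cone (tangent_cone S (x k))"
    "x \<longlonglongrightarrow> xb" "u \<longlonglongrightarrow> v"
    using assms by (auto simp: normal_cone_def PK_limsup_def)
  have "(\<lambda>k. t *\<^sub>R u k) \<longlonglongrightarrow> t *\<^sub>R v" by (intro tendsto_intros xu(3))
  thus ?thesis using xb xu(1,2) assms(2) by (intro NC_intro[of xb S x "\<lambda>k. t *\<^sub>R u k"]) (auto intro: polar_scale)
qed

lemma zero_tangent:
  assumes "p \<in> G"
  shows "0 \<in> tangent_cone G p"
  unfolding tangent_cone_def PK_limsup_def
proof (intro CollectI exI[of _ "\<lambda>k. 1 / real (Suc k)"] exI[of _ "\<lambda>k. 0"] conjI allI)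
  fix k show "1 / real (Suc k) \<in> {0<..}" by simp
  show "0 \<in> (\<lambda>c. (1 / (1 / real (Suc k))) *\<^sub>R (c - p)) ` G" using assms by force
next
  show "(\<lambda>k. 1 / real (Suc k)) \<longlonglongrightarrow> 0" using LIMSEQ_inverse_real_of_nat by (simp add: divide_inverse)
qed simp

lemma tangent_prod:
  assumes "k \<in> tangent_cone G p"
  shows "(h, k) \<in> tangent_cone (UNIV \<times> G) (u, p)"
proof -
  obtain \<tau> z where tz: "\<forall>j. \<tau> j \<in> {0<..} \<and> z j \<in> (\<lambda>c. (1/\<tau> j) *\<^sub>R (c - p)) ` G"
        "\<tau> \<longlonglongrightarrow> 0" "z \<longlonglongrightarrow> k"
    using assms unfolding tangent_cone_def PK_limsup_def by blast
  show ?thesis unfolding tangent_cone_def PK_limsup_def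
  proof (intro CollectI exI[of _ \<tau>] exI[of _ "\<lambda>j. (h, z j)"] conjI allI)
    fix j
    show "\<tau> j \<in> {0<..}" using tz(1) by blast
    obtain g where g: "g \<in> G" "z j = (1/\<tau> j) *\<^sub>R (g - p)" using tz(1) by blast
    have tp: "\<tau> j > 0" using tz(1) by blast
    have "(h, z j) = (1/\<tau> j) *\<^sub>R ((u + \<tau> j *\<^sub>R h, g) - (u, p))"
      using tp by (simp add: g(2))
    thus "(h, z j) \<in> (\<lambda>c. (1 / \<tau> j) *\<^sub>R (c - (u, p))) ` (UNIV \<times> G)" using g(1) by blast
  next
    show "\<tau> \<longlonglongrightarrow> 0" by (rule tz(2))
    show "(\<lambda>j. (h, z j)) \<longlonglongrightarrow> (h, k)" by (intro tendsto_intros tz(3))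
  qed
qed

lemma polar_prod:
  assumes "p \<in> G" "(a, q) \<in> polar_cone (tangent_cone (UNIV \<times> G) (u, p))"
  shows "a = 0 \<and> q \<in> polar_cone (tangent_cone G p)"
proof -
  have "inner (a, q) (a, 0) \<le> 0"
    using assms(2) tangent_prod[OF zero_tangent[OF assms(1)]] unfolding polar_cone_def by blast
  hence "inner a a \<le> 0" by (simp add: inner_Pair)
  hence a: "a = 0" by (metis inner_gt_zero_iff not_le)
  have "inner q k \<le> 0" if "k \<in> tangent_cone G p" for k
    using assms(2) tangent_prod[OF that, of 0 u] unfolding polar_cone_def by (auto simp: inner_Pair)
  thus ?thesis using a by (auto simp: polar_cone_def)
qed

lemma NC_prod:
  assumes "(a, q) \<in> normal_cone (UNIV \<times> G) (u0, p0)"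
  shows "a = 0 \<and> q \<in> normal_cone G p0"
proof -
  note N = NC2[OF assms]
  have p0: "p0 \<in> G" using N by auto
  have small: "norm a < e \<and> (\<exists>p\<in>G. \<exists>w\<in>polar_cone (tangent_cone G p). dist p p0 < e \<and> dist w q < e)"
    if e: "e > 0" for e
  proof -
    obtain x w where x: "x \<in> UNIV \<times> G" "w \<in> polar_cone (tangent_cone (UNIV \<times> G) x)"
      "dist x (u0, p0) < e" "dist w (a, q) < e" using N e by blast
    obtain x1 x2 where xx: "x = (x1, x2)" by (cases x)
    obtain w1 w2 where ww: "w = (w1, w2)" by (cases w)
    have x2: "x2 \<in> G" using x(1) xx by auto
    have w: "w1 = 0" "w2 \<in> polar_cone (tangent_cone G x2)"
      using polar_prod[OF x2] x(2) xx ww by auto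
    have "norm a = dist (fst w) (fst (a, q))" using w(1) ww by (simp add: dist_norm)
    also have "\<dots> \<le> dist w (a, q)" by (rule dist_fst_le)
    finally have na: "norm a < e" using x(4) by simp
    have "dist x2 p0 < e" using dist_snd_le[of x "(u0, p0)"] x(3) xx by simp
    moreover have "dist w2 q < e" using dist_snd_le[of w "(a, q)"] x(4) ww by simp
    ultimately show ?thesis using na x2 w(2) by blast
  qed
  have "a = 0"
  proof (rule ccontr)
    assume "a \<noteq> 0"
    hence "norm a > 0" by simp
    thus False using small[of "norm a"] by simp
  qed
  moreover have "q \<in> normal_cone G p0" by (rule NC1[OF p0]) (use small in blast)
  ultimately show ?thesis by blast
qed



lemma nc_transfer:
  fixes \<Psi> :: "'a::euclidean_space \<Rightarrow> 'b::euclidean_space" and \<Phi> :: "'b \<Rightarrow> 'a"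
    and L :: "'a \<Rightarrow> 'b" and M :: "'b \<Rightarrow> 'a"
  assumes S: "closed S" "xb \<in> S"
    and maps1: "\<And>x. x \<in> S \<Longrightarrow> \<Psi> x \<in> S'"
    and maps2: "\<And>y. y \<in> S' \<Longrightarrow> \<Phi> y \<in> S \<and> \<Psi> (\<Phi> y) = y"
    and cont: "isCont \<Phi> yb" and Phiyb: "\<Phi> yb = xb"
    and lin: "linear L" "linear M" and adj: "\<And>v h. inner (M v) h = inner v (L h)"
    and sd: "\<forall>\<epsilon>>0. \<exists>\<delta>>0. \<forall>x\<in>ball xb \<delta>. \<forall>x'\<in>ball xb \<delta>.
               norm (\<Psi> x - \<Psi> x' - L (x - x')) \<le> \<epsilon> * norm (x - x')"
    and v: "v \<in> normal_cone S' yb"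
  shows "M v \<in> normal_cone S xb"
proof -
  obtain BL where BL: "BL > 0" "\<And>h. norm (L h) \<le> BL * norm h" using linear_bounded_pos[OF lin(1)] by blast
  obtain BM where BM: "BM > 0" "\<And>h. norm (M h) \<le> BM * norm h" using linear_bounded_pos[OF lin(2)] by blast
  note N = NC2[OF v]
  show ?thesis
  proof (rule NC1[OF S(2)], intro allI impI)
    fix e :: real assume e: "e > 0"
    define K where "K = BL + 2 + norm v"
    have K: "K > 0" using BL by (simp add: K_def add_pos_nonneg)
    define \<epsilon> where "\<epsilon> = min 1 (e / (8 * K))"
    have ep: "\<epsilon> > 0" "\<epsilon> \<le> 1" using e K by (auto simp: \<epsilon>_def)
    have "\<epsilon> \<le> e / (8 * K)" by (simp add: \<epsilon>_def)
    hence epK: "\<epsilon> * (8 * K) \<le> e" using K by (simp add: pos_le_divide_eq)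
    obtain \<delta> where d: "\<delta> > 0" "\<forall>x\<in>ball xb \<delta>. \<forall>x'\<in>ball xb \<delta>.
               norm (\<Psi> x - \<Psi> x' - L (x - x')) \<le> \<epsilon> * norm (x - x')" using sd ep(1) by blast
    have "min \<delta> e / 2 > 0" using d e by simp
    then obtain \<delta>' where d': "\<delta>' > 0" "\<And>y. dist y yb < \<delta>' \<Longrightarrow> dist (\<Phi> y) xb < min \<delta> e / 2"
      using cont unfolding continuous_at_eps_delta Phiyb by metis
    define e1 where "e1 = min (min 1 \<delta>') (e / (4 * BM))"
    have "e1 \<le> e / (4 * BM)" by (simp add: e1_def)
    hence "e1 * (4 * BM) \<le> e" using BM by (simp add: pos_le_divide_eq)
    moreover have "e1 * (4 * BM) = 4 * (BM * e1)" by simp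
    ultimately have e14: "BM * e1 \<le> e / 4" by linarith
    have e1: "e1 > 0" "e1 \<le> 1" "e1 \<le> \<delta>'" "BM * e1 \<le> e / 4"
      using d' e BM e14 by (auto simp: e1_def)
    obtain y v' where y: "y \<in> S'" "v' \<in> polar_cone (tangent_cone S' y)" "dist y yb < e1" "dist v' v < e1"
      using N e1(1) by blast
    define x where "x = \<Phi> y"
    have x: "x \<in> S" "\<Psi> x = y" using maps2[OF y(1)] by (auto simp: x_def)
    have xd: "dist x xb < min \<delta> e / 2" unfolding x_def using d'(2) y(3) e1(3) by simp
    have nv': "norm v' \<le> norm v + 1"
      using y(4) e1(2) norm_triangle_ineq2[of v' v] by (simp add: dist_norm)
    obtain \<delta>1 where d1: "\<delta>1 > 0" "\<forall>c\<in>S'. dist c y < \<delta>1 \<longrightarrow> inner v' (c - y) \<le> \<epsilon> * norm (c - y)"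
      using polar_frechet[OF y(2) ep(1)] by blast
    define \<delta>2 where "\<delta>2 = min (\<delta>/2) (\<delta>1/(BL+1))"
    have d2: "\<delta>2 > 0" using d d1 BL by (simp add: \<delta>2_def)
    define \<eta> where "\<eta> = \<epsilon> * K"
    have eta: "\<eta> \<ge> 0" using ep K by (simp add: \<eta>_def)
    have fr: "\<forall>c\<in>S. dist c x < \<delta>2 \<longrightarrow> inner (M v') (c - x) \<le> \<eta> * norm (c - x)"
    proof (intro ballI impI)
      fix c assume c: "c \<in> S" "dist c x < \<delta>2"
      have "dist c xb \<le> dist c x + dist x xb" by (rule dist_triangle)
      also have "\<dots> < \<delta>" using c(2) xd by (simp add: \<delta>2_def)
      finally have cb: "c \<in> ball xb \<delta>" by (simp add: dist_commute)
      have "min \<delta> e / 2 \<le> \<delta> / 2" by simp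
      hence "dist x xb < \<delta>" using xd zero_le_dist[of x xb] by linarith
      hence xb': "x \<in> ball xb \<delta>" by (simp add: dist_commute)
      have est: "norm (\<Psi> c - y - L (c - x)) \<le> \<epsilon> * norm (c - x)"
        using d(2) cb xb' x(2) by blast
      have "norm (\<Psi> c - y) \<le> norm (\<Psi> c - y - L (c - x)) + norm (L (c - x))"
        using norm_triangle_ineq[of "\<Psi> c - y - L (c - x)" "L (c - x)"] by simp
      also have "\<dots> \<le> \<epsilon> * norm (c - x) + BL * norm (c - x)" using est BL(2) by (intro add_mono) auto
      also have "\<dots> \<le> (BL + 1) * norm (c - x)" using mult_left_le_one_le[of "norm (c - x)" \<epsilon>] ep by (simp add: algebra_simps)
      finally have nc: "norm (\<Psi> c - y) \<le> (BL + 1) * norm (c - x)" .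
      have "norm (c - x) < \<delta>1 / (BL + 1)" using c(2) by (simp add: \<delta>2_def dist_norm)
      hence "(BL + 1) * norm (c - x) < \<delta>1" using BL by (simp add: pos_less_divide_eq mult.commute)
      hence "dist (\<Psi> c) y < \<delta>1" using nc by (simp add: dist_norm)
      hence i1: "inner v' (\<Psi> c - y) \<le> \<epsilon> * norm (\<Psi> c - y)" using d1(2) maps1[OF c(1)] by blast
      have i2: "- inner v' (\<Psi> c - y - L (c - x)) \<le> norm v' * (\<epsilon> * norm (c - x))"
      proof -
        have "- inner v' (\<Psi> c - y - L (c - x)) \<le> norm v' * norm (\<Psi> c - y - L (c - x))"
          using norm_cauchy_schwarz[of "-v'" "\<Psi> c - y - L (c - x)"] by simp
        also have "\<dots> \<le> norm v' * (\<epsilon> * norm (c - x))" using est by (simp add: mult_left_mono)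
        finally show ?thesis .
      qed
      have "inner (M v') (c - x) = inner v' (L (c - x))" by (rule adj)
      also have "\<dots> = inner v' (\<Psi> c - y) - inner v' (\<Psi> c - y - L (c - x))"
        by (simp add: inner_diff_right)
      also have "\<dots> \<le> \<epsilon> * norm (\<Psi> c - y) + norm v' * (\<epsilon> * norm (c - x))" using i1 i2 by linarith
      also have "\<dots> \<le> \<epsilon> * ((BL + 1) * norm (c - x)) + (norm v + 1) * (\<epsilon> * norm (c - x))"
        using nc nv' ep by (intro add_mono mult_left_mono mult_right_mono) auto
      also have "\<dots> = \<eta> * norm (c - x)" by (simp add: \<eta>_def K_def algebra_simps)
      finally show "inner (M v') (c - x) \<le> \<eta> * norm (c - x)" .
    qed
    have e2: "e / 2 > 0" using e by simp
    obtain p u where pu: "p \<in> S" "u \<in> polar_cone (tangent_cone S p)" "dist p x < e / 2"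
        "dist u (M v') \<le> 2 * \<eta>"
      using frechet_prox[OF S(1) x(1) d2 eta e2 fr] by blast
    have "dist p xb \<le> dist p x + dist x xb" by (rule dist_triangle)
    also have "\<dots> < e" using pu(3) xd by simp
    finally have pd: "dist p xb < e" .
    have "dist (M v') (M v) = norm (M (v' - v))" by (simp add: dist_norm linear_diff[OF lin(2)])
    also have "\<dots> \<le> BM * norm (v' - v)" by (rule BM(2))
    also have "\<dots> \<le> BM * e1" using y(4) BM(1) by (simp add: dist_norm)
    finally have mv: "dist (M v') (M v) \<le> e / 4" using e1(4) by simp
    have "dist u (M v) \<le> dist u (M v') + dist (M v') (M v)" by (rule dist_triangle)
    also have "\<dots> \<le> 2 * \<eta> + e / 4" using pu(4) mv by simp
    also have "\<dots> < e" using epK e by (simp add: \<eta>_def)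
    finally have ud: "dist u (M v) < e" .
    show "\<exists>p\<in>S. \<exists>u\<in>polar_cone (tangent_cone S p). dist p xb < e \<and> dist u (M v) < e"
      using pu(1,2) pd ud by blast
  qed
qed



lemma norm_fst_le': "norm (fst z) \<le> norm z"
  by (cases z) (simp add: norm_fst_le)

lemma norm_snd_le': "norm (snd z) \<le> norm z"
  by (cases z) (simp add: norm_snd_le)

lemma sd_helper:
  fixes F :: "'u::real_normed_vector \<Rightarrow> 'v::real_normed_vector"
    and \<Psi> :: "'a::real_normed_vector \<Rightarrow> 'b::real_normed_vector"
  assumes sdA: "\<forall>\<epsilon>>0. \<exists>\<delta>>0. \<forall>x\<in>ball ub \<delta>. \<forall>x'\<in>ball ub \<delta>. norm (F x - F x' - A (x - x')) \<le> \<epsilon> * norm (x - x')"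
    and pi: "\<And>x x'. norm (\<pi> x - \<pi> x') \<le> norm (x - x')" "\<pi> xb = ub"
    and est: "\<And>x x'. norm (\<Psi> x - \<Psi> x' - L (x - x')) \<le> norm (F (\<pi> x) - F (\<pi> x') - A (\<pi> x - \<pi> x'))"
  shows "\<forall>\<epsilon>>0. \<exists>\<delta>>0. \<forall>x\<in>ball xb \<delta>. \<forall>x'\<in>ball xb \<delta>. norm (\<Psi> x - \<Psi> x' - L (x - x')) \<le> \<epsilon> * norm (x - x')"
proof (intro allI impI)
  fix \<epsilon> :: real assume e: "\<epsilon> > 0"
  then obtain \<delta> where d: "\<delta> > 0" "\<forall>x\<in>ball ub \<delta>. \<forall>x'\<in>ball ub \<delta>. norm (F x - F x' - A (x - x')) \<le> \<epsilon> * norm (x - x')"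
    using sdA by blast
  have b: "\<pi> x \<in> ball ub \<delta>" if "x \<in> ball xb \<delta>" for x
  proof -
    have "dist ub (\<pi> x) = norm (\<pi> xb - \<pi> x)" using pi(2) by (simp add: dist_norm)
    also have "\<dots> \<le> norm (xb - x)" by (rule pi(1))
    finally show ?thesis using that by (simp add: dist_norm)
  qed
  show "\<exists>\<delta>>0. \<forall>x\<in>ball xb \<delta>. \<forall>x'\<in>ball xb \<delta>. norm (\<Psi> x - \<Psi> x' - L (x - x')) \<le> \<epsilon> * norm (x - x')"
  proof (intro exI[of _ \<delta>] conjI ballI)
    fix x x' assume xx: "x \<in> ball xb \<delta>" "x' \<in> ball xb \<delta>"
    have "norm (\<Psi> x - \<Psi> x' - L (x - x')) \<le> norm (F (\<pi> x) - F (\<pi> x') - A (\<pi> x - \<pi> x'))" by (rule est)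
    also have "\<dots> \<le> \<epsilon> * norm (\<pi> x - \<pi> x')" using d(2) b[OF xx(1)] b[OF xx(2)] by blast
    also have "\<dots> \<le> \<epsilon> * norm (x - x')" using e pi(1) by (simp add: mult_left_mono)
    finally show "norm (\<Psi> x - \<Psi> x' - L (x - x')) \<le> \<epsilon> * norm (x - x')" .
  qed (rule d(1))
qed

lemma norm_P0: "norm (0, d) = norm d"
  by (simp add: norm_Pair)

context
  fixes F :: "real^'n \<Rightarrow> real^'m" and G :: "((real^'n) \<times> (real^'m)) set"
    and A :: "real^'n \<Rightarrow> real^'m" and At :: "real^'m \<Rightarrow> real^'n"
    and ub :: "real^'n" and yb :: "real^'m"
  assumes contF: "\<And>x. isCont F x" and clG: "closed G" and gb: "(ub, yb) \<in> G"
    and linA: "linear A" and linAt: "linear At" and adjA: "\<And>b h. inner (At b) h = inner b (A h)"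
    and sdA: "\<forall>\<epsilon>>0. \<exists>\<delta>>0. \<forall>x\<in>ball ub \<delta>. \<forall>x'\<in>ball ub \<delta>. norm (F x - F x' - A (x - x')) \<le> \<epsilon> * norm (x - x')"
begin

lemma cF: "isCont g x \<Longrightarrow> isCont (\<lambda>p. F (g p)) x"
  by (rule isCont_o2[OF _ contF])

lemmas Alin = linear_add[OF linA] linear_scale[OF linA] linear_diff[OF linA] linear_neg[OF linA]
lemmas Atlin = linear_add[OF linAt] linear_scale[OF linAt] linear_diff[OF linAt] linear_neg[OF linAt]

lemma closed_SG: "closed {(u,w). (u, w - F u) \<in> G}"
proof -
  have "{(u,w). (u, w - F u) \<in> G} = (\<lambda>p. (fst p, snd p - F (fst p))) -` G" by auto
  moreover have "closed ((\<lambda>p. (fst p, snd p - F (fst p))) -` G)"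
    by (rule continuous_closed_vimage[OF clG]) (intro continuous_intros cF)
  ultimately show ?thesis by simp
qed

lemma closed_SCC: "closed {(u,sw). (fst sw + u, snd sw - F u) \<in> G}"
proof -
  have "{(u,sw). (fst sw + u, snd sw - F u) \<in> G} = (\<lambda>p. (fst (snd p) + fst p, snd (snd p) - F (fst p))) -` G" by auto
  moreover have "closed ((\<lambda>p. (fst (snd p) + fst p, snd (snd p) - F (fst p))) -` G)"
    by (rule continuous_closed_vimage[OF clG]) (intro continuous_intros cF)
  ultimately show ?thesis by simp
qed

lemma closed_SQ: "closed {(uy,s). uy \<in> G \<and> s = F (fst uy) + snd uy}"
proof -
  have "{(uy,s). uy \<in> G \<and> s = F (fst uy) + snd uy} = (\<lambda>p. (fst p, snd p - F (fst (fst p)) - snd (fst p))) -` (G \<times> {0})"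
    by auto
  moreover have "closed ((\<lambda>p. (fst p, snd p - F (fst (fst p)) - snd (fst p))) -` (G \<times> {0}))"
    by (rule continuous_closed_vimage[OF closed_Times[OF clG closed_singleton]]) (intro continuous_intros cF)
  ultimately show ?thesis by simp
qed

lemma closed_SQQ: "closed {(x,sw). snd x \<in> G \<and> sw = (- fst x + fst (snd x), F (fst x) + snd (snd x))}"
proof -
  have "{(x,sw). snd x \<in> G \<and> sw = (- fst x + fst (snd x), F (fst x) + snd (snd x))}
     = (\<lambda>p. (snd (fst p), snd p - (- fst (fst p) + fst (snd (fst p)), F (fst (fst p)) + snd (snd (fst p))))) -` (G \<times> {0})"
    by (auto simp: zero_prod_def)
  moreover have "closed ((\<lambda>p. (snd (fst p), snd p - (- fst (fst p) + fst (snd (fst p)), F (fst (fst p)) + snd (snd (fst p))))) -` (G \<times> {0}))"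
    by (rule continuous_closed_vimage[OF closed_Times[OF clG closed_singleton]]) (intro continuous_intros cF)
  ultimately show ?thesis by simp
qed

lemma F1:
  assumes "(a, b) \<in> normal_cone {(u,w). (u, w - F u) \<in> G} (ub, F ub + yb)"
  shows "(a + At b, b) \<in> normal_cone G (ub, yb)"
proof -
  have lL: "linear (\<lambda>p::((real^'n) \<times> (real^'m)). (fst p, A (fst p) + snd p))"
    unfolding linear_iff by (simp add: Alin algebra_simps)
  have lM: "linear (\<lambda>q::((real^'n) \<times> (real^'m)). (fst q + At (snd q), snd q))"
    unfolding linear_iff by (simp add: Atlin algebra_simps)
  have adj: "\<And>v h. inner ((\<lambda>q. (fst q + At (snd q), snd q)) v) h = inner v ((\<lambda>p. (fst p, A (fst p) + snd p)) h)"
    by (simp add: inner_prod_def inner_add_left inner_add_right adjA)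
  have sd: "\<forall>\<epsilon>>0. \<exists>\<delta>>0. \<forall>x\<in>ball (ub, yb) \<delta>. \<forall>x'\<in>ball (ub, yb) \<delta>.
     norm ((\<lambda>p. (fst p, F (fst p) + snd p)) x - (\<lambda>p. (fst p, F (fst p) + snd p)) x'
       - (\<lambda>p. (fst p, A (fst p) + snd p)) (x - x')) \<le> \<epsilon> * norm (x - x')"
  proof (rule sd_helper[OF sdA, where \<pi>=fst])
    show "norm (fst x - fst x') \<le> norm (x - x')" for x x' :: "(real^'n) \<times> (real^'m)"
      using norm_fst_le'[of "x - x'"] by simp
  qed (simp_all add: Alin algebra_simps)
  have cont: "isCont (\<lambda>q. (fst q, snd q - F (fst q))) (ub, F ub + yb)"
    by (intro continuous_intros cF)
  have "(\<lambda>q. (fst q + At (snd q), snd q)) (a, b) \<in> normal_cone G (ub, yb)"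
    by (rule nc_transfer[OF clG gb _ _ cont _ lL lM adj sd assms]) auto
  thus ?thesis by simp
qed


lemma F2:
  assumes "(b, c) \<in> normal_cone G (ub, yb)"
  shows "(b - At c, c) \<in> normal_cone {(u,w). (u, w - F u) \<in> G} (ub, F ub + yb)"
proof -
  have lL: "linear (\<lambda>p::((real^'n) \<times> (real^'m)). (fst p, snd p - A (fst p)))"
    unfolding linear_iff by (simp add: Alin algebra_simps)
  have lM: "linear (\<lambda>q::((real^'n) \<times> (real^'m)). (fst q - At (snd q), snd q))"
    unfolding linear_iff by (simp add: Atlin algebra_simps)
  have adj: "\<And>v h. inner ((\<lambda>q. (fst q - At (snd q), snd q)) v) h = inner v ((\<lambda>p. (fst p, snd p - A (fst p))) h)"
    by (simp add: inner_prod_def inner_diff_left inner_diff_right adjA)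
  have sd: "\<forall>\<epsilon>>0. \<exists>\<delta>>0. \<forall>x\<in>ball (ub, F ub + yb) \<delta>. \<forall>x'\<in>ball (ub, F ub + yb) \<delta>.
     norm ((\<lambda>p. (fst p, snd p - F (fst p))) x - (\<lambda>p. (fst p, snd p - F (fst p))) x'
       - (\<lambda>p. (fst p, snd p - A (fst p))) (x - x')) \<le> \<epsilon> * norm (x - x')"
  proof (rule sd_helper[OF sdA, where \<pi>=fst])
    show "norm (fst x - fst x') \<le> norm (x - x')" for x x' :: "(real^'n) \<times> (real^'m)"
      using norm_fst_le'[of "x - x'"] by simp
  next
    show "norm ((\<lambda>p. (fst p, snd p - F (fst p))) x - (\<lambda>p. (fst p, snd p - F (fst p))) x'
       - (\<lambda>p. (fst p, snd p - A (fst p))) (x - x')) \<le> norm (F (fst x) - F (fst x') - A (fst x - fst x'))" for x x'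
    proof -
      have e: "(\<lambda>p. (fst p, snd p - F (fst p))) x - (\<lambda>p. (fst p, snd p - F (fst p))) x'
       - (\<lambda>p. (fst p, snd p - A (fst p))) (x - x') = (0, - (F (fst x) - F (fst x') - A (fst x - fst x')))"
        by (simp add: algebra_simps)
      show ?thesis unfolding e norm_P0 norm_minus_cancel by (rule order_refl)
    qed
  qed simp
  have cont: "isCont (\<lambda>q. (fst q, F (fst q) + snd q)) (ub, yb)"
    by (intro continuous_intros cF)
  have "(\<lambda>q. (fst q - At (snd q), snd q)) (b, c) \<in> normal_cone {(u,w). (u, w - F u) \<in> G} (ub, F ub + yb)"
    by (rule nc_transfer[OF closed_SG _ _ _ cont _ lL lM adj sd assms]) (use gb in auto)
  thus ?thesis by simp
qed

lemma F3:
  assumes "(b, c) \<in> normal_cone G (ub, yb)"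
  shows "(b - At c, (b, c)) \<in> normal_cone {(u,sw). (fst sw + u, snd sw - F u) \<in> G} (ub, (0, F ub + yb))"
proof -
  have lL: "linear (\<lambda>p::((real^'n) \<times> (real^'n) \<times> (real^'m)). (fst (snd p) + fst p, snd (snd p) - A (fst p)))"
    unfolding linear_iff by (simp add: Alin algebra_simps)
  have lM: "linear (\<lambda>q::((real^'n) \<times> (real^'m)). (fst q - At (snd q), q))"
    unfolding linear_iff by (simp add: Atlin algebra_simps)
  have adj: "\<And>v h. inner ((\<lambda>q. (fst q - At (snd q), q)) v) h = inner v ((\<lambda>p. (fst (snd p) + fst p, snd (snd p) - A (fst p))) h)"
    by (simp add: inner_prod_def inner_diff_left inner_diff_right inner_add_left inner_add_right adjA)
  have sd: "\<forall>\<epsilon>>0. \<exists>\<delta>>0. \<forall>x\<in>ball (ub, (0, F ub + yb)) \<delta>. \<forall>x'\<in>ball (ub, (0, F ub + yb)) \<delta>.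
     norm ((\<lambda>p. (fst (snd p) + fst p, snd (snd p) - F (fst p))) x - (\<lambda>p. (fst (snd p) + fst p, snd (snd p) - F (fst p))) x'
       - (\<lambda>p. (fst (snd p) + fst p, snd (snd p) - A (fst p))) (x - x')) \<le> \<epsilon> * norm (x - x')"
  proof (rule sd_helper[OF sdA, where \<pi>=fst])
    show "norm (fst x - fst x') \<le> norm (x - x')" for x x' :: "(real^'n) \<times> (real^'n) \<times> (real^'m)"
      using norm_fst_le'[of "x - x'"] by simp
  next
    show "norm ((\<lambda>p. (fst (snd p) + fst p, snd (snd p) - F (fst p))) x - (\<lambda>p. (fst (snd p) + fst p, snd (snd p) - F (fst p))) x'
       - (\<lambda>p. (fst (snd p) + fst p, snd (snd p) - A (fst p))) (x - x')) \<le> norm (F (fst x) - F (fst x') - A (fst x - fst x'))" for x x'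
    proof -
      have e: "(\<lambda>p. (fst (snd p) + fst p, snd (snd p) - F (fst p))) x - (\<lambda>p. (fst (snd p) + fst p, snd (snd p) - F (fst p))) x'
       - (\<lambda>p. (fst (snd p) + fst p, snd (snd p) - A (fst p))) (x - x') = (0, - (F (fst x) - F (fst x') - A (fst x - fst x')))"
        by (simp add: algebra_simps)
      show ?thesis unfolding e norm_P0 norm_minus_cancel by (rule order_refl)
    qed
  qed simp
  have cont: "isCont (\<lambda>q. (ub, (fst q - ub, F ub + snd q))) (ub, yb)"
    by (intro continuous_intros)
  have "(\<lambda>q. (fst q - At (snd q), q)) (b, c) \<in> normal_cone {(u,sw). (fst sw + u, snd sw - F u) \<in> G} (ub, (0, F ub + yb))"
    by (rule nc_transfer[OF closed_SCC _ _ _ cont _ lL lM adj sd assms]) (use gb in auto)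
  thus ?thesis by simp
qed

lemma F4:
  assumes "(b, c) \<in> normal_cone G (ub, yb)"
  shows "((b - At c, 0), c) \<in> normal_cone {(uy,s). uy \<in> G \<and> s = F (fst uy) + snd uy} ((ub, yb), F ub + yb)"
proof -
  have lL: "linear (\<lambda>p::(((real^'n) \<times> (real^'m)) \<times> (real^'m)). (fst (fst p), snd p - A (fst (fst p))))"
    unfolding linear_iff by (simp add: Alin algebra_simps)
  have lM: "linear (\<lambda>q::((real^'n) \<times> (real^'m)). ((fst q - At (snd q), 0::real^'m), snd q))"
    unfolding linear_iff by (simp add: Atlin algebra_simps)
  have adj: "\<And>v h. inner ((\<lambda>q. ((fst q - At (snd q), 0::real^'m), snd q)) v) h = inner v ((\<lambda>p. (fst (fst p), snd p - A (fst (fst p)))) h)"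
    by (simp add: inner_prod_def inner_diff_left inner_diff_right adjA)
  have sd: "\<forall>\<epsilon>>0. \<exists>\<delta>>0. \<forall>x\<in>ball ((ub, yb), F ub + yb) \<delta>. \<forall>x'\<in>ball ((ub, yb), F ub + yb) \<delta>.
     norm ((\<lambda>p. (fst (fst p), snd p - F (fst (fst p)))) x - (\<lambda>p. (fst (fst p), snd p - F (fst (fst p)))) x'
       - (\<lambda>p. (fst (fst p), snd p - A (fst (fst p)))) (x - x')) \<le> \<epsilon> * norm (x - x')"
  proof (rule sd_helper[OF sdA, where \<pi>="\<lambda>p. fst (fst p)"])
    show "norm (fst (fst x) - fst (fst x')) \<le> norm (x - x')" for x x' :: "((real^'n) \<times> (real^'m)) \<times> (real^'m)"
      using norm_fst_le'[of "fst (x - x')"] norm_fst_le'[of "x - x'"] by simp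
  next
    show "norm ((\<lambda>p. (fst (fst p), snd p - F (fst (fst p)))) x - (\<lambda>p. (fst (fst p), snd p - F (fst (fst p)))) x'
       - (\<lambda>p. (fst (fst p), snd p - A (fst (fst p)))) (x - x')) \<le> norm (F (fst (fst x)) - F (fst (fst x')) - A (fst (fst x) - fst (fst x')))" for x x'
    proof -
      have e: "(\<lambda>p. (fst (fst p), snd p - F (fst (fst p)))) x - (\<lambda>p. (fst (fst p), snd p - F (fst (fst p)))) x'
       - (\<lambda>p. (fst (fst p), snd p - A (fst (fst p)))) (x - x') = (0, - (F (fst (fst x)) - F (fst (fst x')) - A (fst (fst x) - fst (fst x'))))"
        by (simp add: algebra_simps)
      show ?thesis unfolding e norm_P0 norm_minus_cancel by (rule order_refl)
    qed
  qed simp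
  have cont: "isCont (\<lambda>q. (q, F (fst q) + snd q)) (ub, yb)"
    by (intro continuous_intros cF)
  have "(\<lambda>q. ((fst q - At (snd q), 0::real^'m), snd q)) (b, c) \<in> normal_cone {(uy,s). uy \<in> G \<and> s = F (fst uy) + snd uy} ((ub, yb), F ub + yb)"
    by (rule nc_transfer[OF closed_SQ _ _ _ cont _ lL lM adj sd assms]) (use gb in auto)
  thus ?thesis by simp
qed

lemma F5:
  assumes "(a, (b, c)) \<in> normal_cone {(u,sw). (fst sw + u, snd sw - F u) \<in> G} (ub, (0, F ub + yb))"
  shows "((a, 0, 0), (b, c)) \<in> normal_cone {(x,sw). snd x \<in> G \<and> sw = (- fst x + fst (snd x), F (fst x) + snd (snd x))}
            ((ub, ub, yb), (0, F ub + yb))"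
proof -
  let ?L = "\<lambda>p::(((real^'n) \<times> (real^'n) \<times> (real^'m)) \<times> ((real^'n) \<times> (real^'m))). (fst (fst p), snd p)"
  let ?M = "\<lambda>q::((real^'n) \<times> (real^'n) \<times> (real^'m)). ((fst q, 0::real^'n, 0::real^'m), snd q)"
  have lL: "linear ?L" unfolding linear_iff by simp
  have lM: "linear ?M" unfolding linear_iff by simp
  have adj: "\<And>v h. inner (?M v) h = inner v (?L h)"
    by (simp add: inner_prod_def)
  have sd: "\<forall>\<epsilon>>0. \<exists>\<delta>>0. \<forall>x\<in>ball ((ub, ub, yb), (0, F ub + yb)) \<delta>. \<forall>x'\<in>ball ((ub, ub, yb), (0, F ub + yb)) \<delta>.
     norm (?L x - ?L x' - ?L (x - x')) \<le> \<epsilon> * norm (x - x')"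
    by (intro allI impI exI[of _ 1]) auto
  have cont: "isCont (\<lambda>q. ((fst q, fst (snd q) + fst q, snd (snd q) - F (fst q)), snd q)) (ub, (0, F ub + yb))"
    by (intro continuous_intros cF)
  have "?M (a, (b, c)) \<in> normal_cone {(x,sw). snd x \<in> G \<and> sw = (- fst x + fst (snd x), F (fst x) + snd (snd x))}
            ((ub, ub, yb), (0, F ub + yb))"
    by (rule nc_transfer[OF closed_SQQ _ _ _ cont _ lL lM adj sd assms]) (use gb in auto)
  thus ?thesis by simp
qed

lemma F6:
  assumes "((a1, a2, a3), (b, c)) \<in> normal_cone {(x,sw). snd x \<in> G \<and> sw = (- fst x + fst (snd x), F (fst x) + snd (snd x))}
            ((ub, ub, yb), (0, F ub + yb))"
  shows "(a1 - b + At c, (a2 + b, a3 + c)) \<in> normal_cone (UNIV \<times> G) (ub, (ub, yb))"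
proof -
  let ?Psi = "\<lambda>p::((real^'n) \<times> (real^'n) \<times> (real^'m)). (p, (- fst p + fst (snd p), F (fst p) + snd (snd p)))"
  let ?L = "\<lambda>p::((real^'n) \<times> (real^'n) \<times> (real^'m)). (p, (- fst p + fst (snd p), A (fst p) + snd (snd p)))"
  let ?M = "\<lambda>q::(((real^'n) \<times> (real^'n) \<times> (real^'m)) \<times> ((real^'n) \<times> (real^'m))).
     (fst (fst q) - fst (snd q) + At (snd (snd q)), (fst (snd (fst q)) + fst (snd q), snd (snd (fst q)) + snd (snd q)))"
  have lL: "linear ?L" unfolding linear_iff by (simp add: Alin algebra_simps)
  have lM: "linear ?M" unfolding linear_iff by (simp add: Atlin algebra_simps)
  have adj: "\<And>v h. inner (?M v) h = inner v (?L h)"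
    by (simp add: inner_prod_def inner_diff_left inner_diff_right inner_add_left inner_add_right adjA)
  have sd: "\<forall>\<epsilon>>0. \<exists>\<delta>>0. \<forall>x\<in>ball (ub, (ub, yb)) \<delta>. \<forall>x'\<in>ball (ub, (ub, yb)) \<delta>.
     norm (?Psi x - ?Psi x' - ?L (x - x')) \<le> \<epsilon> * norm (x - x')"
  proof (rule sd_helper[OF sdA, where \<pi>=fst])
    show "norm (fst x - fst x') \<le> norm (x - x')" for x x' :: "(real^'n) \<times> (real^'n) \<times> (real^'m)"
      using norm_fst_le'[of "x - x'"] by simp
  next
    show "norm (?Psi x - ?Psi x' - ?L (x - x')) \<le> norm (F (fst x) - F (fst x') - A (fst x - fst x'))" for x x'
    proof -
      have e: "?Psi x - ?Psi x' - ?L (x - x') = (0, (0, F (fst x) - F (fst x') - A (fst x - fst x')))"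
        by (simp add: algebra_simps)
      show ?thesis unfolding e norm_P0 norm_minus_cancel by (rule order_refl)
    qed
  qed simp
  have cont: "isCont (\<lambda>q::(((real^'n) \<times> (real^'n) \<times> (real^'m)) \<times> ((real^'n) \<times> (real^'m))). fst q) ((ub, ub, yb), (0, F ub + yb))"
    by (intro continuous_intros)
  have "?M ((a1, a2, a3), (b, c)) \<in> normal_cone (UNIV \<times> G) (ub, (ub, yb))"
    by (rule nc_transfer[OF closed_Times[OF closed_UNIV clG] _ _ _ cont _ lL lM adj sd assms]) (use gb in auto)
  thus ?thesis by simp
qed

end



lemma Reg_le:
  assumes "(u, y) \<in> gph S" "norm z = 1" "(v, - z) \<in> normal_cone (gph S) (u, y)"
  shows "Reg u y S \<le> ereal (norm v)"
proof -
  have d: "dist0 (coderiv S u y z) \<le> ereal (norm v)"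
    unfolding dist0_def coderiv_def by (rule INF_lower) (use assms(3) in simp)
  have "(INF z\<in>{z. norm z = 1}. dist0 (coderiv S u y z)) \<le> ereal (norm v)"
    using assms(2) d by (intro INF_lower2[of z]) auto
  thus ?thesis using assms(1) by (simp add: Reg_def)
qed

lemma Reg_geI:
  assumes "(u, y) \<in> gph S"
    "\<And>z v. norm z = 1 \<Longrightarrow> (v, - z) \<in> normal_cone (gph S) (u, y) \<Longrightarrow> r \<le> ereal (norm v)"
  shows "r \<le> Reg u y S"
  using assms unfolding Reg_def dist0_def coderiv_def
  by (auto intro!: INF_greatest)

lemma Reg_nonneg: "0 \<le> Reg u y S"
  unfolding Reg_def dist0_def by (auto intro!: INF_greatest)

lemma Reg_lessE:
  assumes "(u, y) \<in> gph S" "Reg u y S < ereal e"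
  shows "\<exists>z v. norm z = 1 \<and> (v, - z) \<in> normal_cone (gph S) (u, y) \<and> norm v < e"
  using assms unfolding Reg_def dist0_def coderiv_def by (auto simp: INF_less_iff)


theorem theorem5:
  fixes F :: "real^'n \<Rightarrow> real^'m"
    and C :: "real^'n \<Rightarrow> (real^'m) set"
    and ub :: "real^'n" and yb :: "real^'m"
  assumes contF: "continuous_on UNIV F"
    and closedC: "closed (gph C)"
    and gb: "(ub, yb) \<in> gph C"
    and strict: "strictly_differentiable_at F ub"
  defines "\<Sigma> \<equiv> (\<lambda>u. (\<lambda>y. F u + y) ` C u)"
    and "CC \<equiv> (\<lambda>u. (\<lambda>p. (- u, F u) + p) ` gph C)"
    and "Q \<equiv> (\<lambda>(u, y). (\<lambda>d. (F u + y) + d) ` indicator_map (gph C) (u, y))"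
    and "QQ \<equiv> (\<lambda>(u, \<sigma>, y). (\<lambda>d. (- u + \<sigma>, F u + y) + d) ` indicator_map (gph C) (\<sigma>, y))"
  shows "closed (gph \<Sigma>) \<and> closed (gph CC) \<and> closed (gph Q) \<and> closed (gph QQ)
     \<and> Reg ub (F ub + yb) \<Sigma> \<ge> max (Reg ub (0, F ub + yb) CC) (Reg (ub, yb) (F ub + yb) Q)
     \<and> max (Reg ub (0, F ub + yb) CC) (Reg (ub, yb) (F ub + yb) Q) \<ge> Reg (ub, ub, yb) (0, F ub + yb) QQ
     \<and> Reg (ub, ub, yb) (0, F ub + yb) QQ \<ge> 0
     \<and> (Reg (ub, ub, yb) (0, F ub + yb) QQ = 0 \<longrightarrow>
          Reg ub (F ub + yb) \<Sigma> = 0 \<and> Reg ub (0, F ub + yb) CC = 0 \<and> Reg (ub, yb) (F ub + yb) Q = 0)"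
proof -
  obtain A where linA: "linear A" and sdA: "\<forall>\<epsilon>>0. \<exists>\<delta>>0. \<forall>x\<in>ball ub \<delta>. \<forall>x'\<in>ball ub \<delta>.
      norm (F x - F x' - A (x - x')) \<le> \<epsilon> * norm (x - x')"
    using strict unfolding strictly_differentiable_at_def by blast
  define At where "At = adjoint A"
  have linAt: "linear At" using adjoint_linear[OF linA] by (simp add: At_def)
  have adjA: "\<And>b h. inner (At b) h = inner b (A h)"
    using adjoint_works[OF linA] by (simp add: At_def inner_commute)
  have contF': "\<And>x. isCont F x" using contF continuous_on_eq_continuous_at[OF open_UNIV] by blast
  define G where "G = gph C"
  have clG: "closed G" using closedC by (simp add: G_def)
  have gbG: "(ub, yb) \<in> G" using gb by (simp add: G_def)
  note ctx = contF' clG gbG linA linAt adjA sdA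
  have hS: "gph \<Sigma> = {(u,w). (u, w - F u) \<in> G}"
    by (force simp: gph_def \<Sigma>_def G_def image_iff)
  have hCC: "gph CC = {(u,sw). (fst sw + u, snd sw - F u) \<in> G}"
  proof (rule set_eqI)
    fix x :: "(real^'n) \<times> (real^'n) \<times> (real^'m)"
    obtain u s w where x: "x = (u, s, w)" by (cases x) auto
    have "(s, w) \<in> (\<lambda>p. (- u, F u) + p) ` G \<longleftrightarrow> (s + u, w - F u) \<in> G"
    proof
      assume "(s, w) \<in> (\<lambda>p. (- u, F u) + p) ` G"
      then obtain p where "p \<in> G" "(s, w) = (- u, F u) + p" by blast
      thus "(s + u, w - F u) \<in> G" by (cases p) auto
    next
      assume "(s + u, w - F u) \<in> G"
      moreover have "(s, w) = (- u, F u) + (s + u, w - F u)" by simp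
      ultimately show "(s, w) \<in> (\<lambda>p. (- u, F u) + p) ` G" by blast
    qed
    thus "x \<in> gph CC \<longleftrightarrow> x \<in> {(u,sw). (fst sw + u, snd sw - F u) \<in> G}"
      by (simp add: x gph_def CC_def G_def)
  qed
  have hQ: "gph Q = {(uy,s). uy \<in> G \<and> s = F (fst uy) + snd uy}"
    by (auto simp: gph_def Q_def G_def indicator_map_def split: if_splits)
  have hQQ: "gph QQ = {(x,sw). snd x \<in> G \<and> sw = (- fst x + fst (snd x), F (fst x) + snd (snd x))}"
    by (auto simp: gph_def QQ_def G_def indicator_map_def zero_prod_def split: if_splits)
  have c1: "closed (gph \<Sigma>)" unfolding hS by (rule closed_SG[OF ctx])
  have c2: "closed (gph CC)" unfolding hCC by (rule closed_SCC[OF ctx])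
  have c3: "closed (gph Q)" unfolding hQ by (rule closed_SQ[OF ctx])
  have c4: "closed (gph QQ)" unfolding hQQ by (rule closed_SQQ[OF ctx])
  have mS: "(ub, F ub + yb) \<in> gph \<Sigma>" unfolding hS using gbG by simp
  have mCC: "(ub, (0, F ub + yb)) \<in> gph CC" unfolding hCC using gbG by simp
  have mQ: "((ub, yb), F ub + yb) \<in> gph Q" unfolding hQ using gbG by simp
  have mQQ: "((ub, ub, yb), (0, F ub + yb)) \<in> gph QQ" unfolding hQQ using gbG by simp
  define RS where "RS = Reg ub (F ub + yb) \<Sigma>"
  define RCC where "RCC = Reg ub (0, F ub + yb) CC"
  define RQ where "RQ = Reg (ub, yb) (F ub + yb) Q"
  define RQQ where "RQQ = Reg (ub, ub, yb) (0, F ub + yb) QQ"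
  have AtN: "At (- z) = - At z" for z using linear_neg[OF linAt] by simp
  have i: "RCC \<le> RS" "RQ \<le> RS"
  proof -
    have "RCC \<le> ereal (norm v) \<and> RQ \<le> ereal (norm v)"
      if z: "norm z = 1" and v: "(v, - z) \<in> normal_cone (gph \<Sigma>) (ub, F ub + yb)" for z v
    proof
      have "(v + At (- z), - z) \<in> normal_cone G (ub, yb)"
        by (rule F1[OF ctx]) (use v hS in simp)
      hence nG: "(v - At z, - z) \<in> normal_cone G (ub, yb)" by (simp add: AtN)
      have "((v - At z) - At (- z), (v - At z, - z)) \<in> normal_cone {(u,sw). (fst sw + u, snd sw - F u) \<in> G} (ub, (0, F ub + yb))"
        by (rule F3[OF ctx nG])
      hence n3: "(v, - (At z - v, z)) \<in> normal_cone (gph CC) (ub, (0, F ub + yb))"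
        unfolding hCC by (simp add: AtN)
      define w where "w = (At z - v, z)"
      have nw: "norm w \<ge> 1" using norm_snd_le[of z "At z - v"] z by (simp add: w_def)
      hence nw0: "norm w > 0" by linarith
      have "(1 / norm w) *\<^sub>R (v, - w) \<in> normal_cone (gph CC) (ub, (0, F ub + yb))"
        by (rule NC_scale) (use n3 nw0 in \<open>simp_all add: w_def\<close>)
      hence "((1 / norm w) *\<^sub>R v, - ((1 / norm w) *\<^sub>R w)) \<in> normal_cone (gph CC) (ub, (0, F ub + yb))"
        by simp
      moreover have "norm ((1 / norm w) *\<^sub>R w) = 1" using nw0 by simp
      ultimately have "RCC \<le> ereal (norm ((1 / norm w) *\<^sub>R v))"
        unfolding RCC_def by (intro Reg_le[OF mCC]) 
      also have "norm ((1 / norm w) *\<^sub>R v) \<le> norm v"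
        using nw nw0 mult_left_mono[of 1 "norm w" "norm v"] by (simp add: divide_le_eq)
      hence "ereal (norm ((1 / norm w) *\<^sub>R v)) \<le> ereal (norm v)" by simp
      finally show "RCC \<le> ereal (norm v)" .
      have "(((v - At z) - At (- z), 0::real^'m), - z) \<in> normal_cone {(uy,s). uy \<in> G \<and> s = F (fst uy) + snd uy} ((ub, yb), F ub + yb)"
        by (rule F4[OF ctx nG])
      hence "((v, 0), - z) \<in> normal_cone (gph Q) ((ub, yb), F ub + yb)"
        unfolding hQ by (simp add: AtN)
      hence "RQ \<le> ereal (norm (v, 0::real^'m))" unfolding RQ_def by (rule Reg_le[OF mQ z])
      thus "RQ \<le> ereal (norm v)" by (simp add: norm_Pair)
    qed
    thus "RCC \<le> RS" "RQ \<le> RS" unfolding RS_def by (auto intro!: Reg_geI[OF mS])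
  qed
  have iii: "RQQ \<le> RCC"
  proof -
    have "RQQ \<le> ereal (norm v)"
      if z: "norm z = 1" and v: "(v, - z) \<in> normal_cone (gph CC) (ub, (0, F ub + yb))" for z v
    proof -
      obtain z1 z2 where zz: "z = (z1, z2)" by (cases z)
      have "((v, 0, 0), (- z1, - z2)) \<in> normal_cone {(x,sw). snd x \<in> G \<and> sw = (- fst x + fst (snd x), F (fst x) + snd (snd x))}
            ((ub, ub, yb), (0, F ub + yb))"
        by (rule F5[OF ctx]) (use v hCC zz in simp)
      hence "((v, 0, 0), - z) \<in> normal_cone (gph QQ) ((ub, ub, yb), (0, F ub + yb))"
        unfolding hQQ by (simp add: zz)
      hence "RQQ \<le> ereal (norm (v, 0::real^'n, 0::real^'m))" unfolding RQQ_def by (rule Reg_le[OF mQQ z])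
      thus ?thesis by (simp add: norm_Pair)
    qed
    thus ?thesis unfolding RCC_def by (auto intro!: Reg_geI[OF mCC])
  qed
  have iv: "RS = 0" if RQQ0: "RQQ = 0"
  proof -
    obtain K where K: "K > 0" "\<And>x. norm (At x) \<le> K * norm x" using linear_bounded_pos[OF linAt] by blast
    have RSe: "RS \<le> ereal e" if e: "e > 0" for e
    proof -
      define P where "P = K + 1"
      have P: "P > 0" "P \<ge> 1" using K by (simp_all add: P_def)
      define \<delta> where "\<delta> = min (1 / (4 * P)) (e / (4 * P * (K + 2)))"
      have dpos: "\<delta> > 0" using P K e by (simp add: \<delta>_def)
      have d1: "\<delta> * (4 * P) \<le> 1"
      proof -
        have "\<delta> \<le> 1 / (4 * P)" by (simp add: \<delta>_def)
        thus ?thesis using P by (simp add: le_divide_eq)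
      qed
      have d2: "\<delta> * (4 * P * (K + 2)) \<le> e"
      proof -
        have "\<delta> \<le> e / (4 * P * (K + 2))" by (simp add: \<delta>_def)
        moreover have "4 * P * (K + 2) > 0" using P K by simp
        ultimately show ?thesis by (simp add: le_divide_eq)
      qed
      have "RQQ < ereal \<delta>" using RQQ0 dpos by simp
      then obtain w a where wa: "norm w = 1" "(a, - w) \<in> normal_cone (gph QQ) ((ub, ub, yb), (0, F ub + yb))"
          "norm a < \<delta>"
        using Reg_lessE[OF mQQ] unfolding RQQ_def by blast
      obtain w1 w2 where ww: "w = (w1, w2)" by (cases w)
      obtain a1 a2 a3 where aa: "a = (a1, a2, a3)" by (cases a) auto
      have na: "norm a1 < \<delta>" "norm a2 < \<delta>" "norm a3 < \<delta>"
        using wa(3) norm_fst_le[where x=a1 and y="(a2, a3)"] norm_snd_le[where x=a1 and y="(a2, a3)"]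
          norm_fst_le[where x=a2 and y=a3] norm_snd_le[where x=a2 and y=a3] unfolding aa by linarith+
      have "(a1 - (- w1) + At (- w2), (a2 + - w1, a3 + - w2)) \<in> normal_cone (UNIV \<times> G) (ub, (ub, yb))"
        by (rule F6[OF ctx]) (use wa(2) hQQ aa ww in simp)
      hence pr: "a1 - (- w1) + At (- w2) = 0 \<and> (a2 + - w1, a3 + - w2) \<in> normal_cone G (ub, yb)"
        by (rule NC_prod)
      hence w1: "w1 = At w2 - a1" by (simp add: AtN algebra_simps)
      have n2: "((a2 + - w1) - At (a3 + - w2), a3 + - w2) \<in> normal_cone {(u,w). (u, w - F u) \<in> G} (ub, F ub + yb)"
        by (rule F2[OF ctx]) (use pr in simp)
      have eq: "(a2 + - w1) - At (a3 + - w2) = a1 + a2 - At a3"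
      proof -
        have e1: "At (a3 + - w2) = At a3 - At w2" using linear_diff[OF linAt, of a3 w2] by simp
        show ?thesis unfolding w1 e1 by (simp add: algebra_simps)
      qed
      have n2': "(a1 + a2 - At a3, a3 + - w2) \<in> normal_cone {(u,w). (u, w - F u) \<in> G} (ub, F ub + yb)"
        using n2 unfolding eq .
      have nd: "(a1 + a2 - At a3, - (w2 - a3)) \<in> normal_cone (gph \<Sigma>) (ub, F ub + yb)"
        unfolding hS using n2' by simp
      define d where "d = a1 + a2 - At a3"
      define z where "z = w2 - a3"
      have dn: "norm d \<le> (K + 2) * \<delta>"
      proof -
        have "norm d \<le> norm a1 + norm a2 + norm (At a3)"
          unfolding d_def using norm_triangle_ineq4[of "a1 + a2" "At a3"] norm_triangle_ineq[of a1 a2] by linarith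
        also have "\<dots> \<le> \<delta> + \<delta> + K * \<delta>"
          using na K(2)[of a3] mult_left_mono[of "norm a3" \<delta> K] K(1) by linarith
        finally show ?thesis by (simp add: algebra_simps)
      qed
      have "1 \<le> norm w1 + norm w2" using wa(1) norm_Pair_le[of w1 w2] ww by simp
      moreover have "norm w1 \<le> K * norm w2 + \<delta>"
        using w1 norm_triangle_ineq4[of "At w2" a1] K(2)[of w2] na(1) by simp
      ultimately have "1 \<le> P * norm w2 + \<delta>" by (simp add: P_def algebra_simps)
      moreover have "norm z \<ge> norm w2 - \<delta>"
        using norm_triangle_ineq2[of w2 a3] na(3) by (simp add: z_def)
      ultimately have "P * norm z \<ge> 1 - \<delta> - P * \<delta>"
        using P mult_left_mono[of "norm w2 - \<delta>" "norm z" P] by (simp add: algebra_simps)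
      moreover have "\<delta> + P * \<delta> \<le> 1 / 2"
      proof -
        have "\<delta> \<le> P * \<delta>" using P dpos by simp
        moreover have "P * \<delta> \<le> 1 / 4" using d1 by (simp add: algebra_simps)
        ultimately show ?thesis by simp
      qed
      ultimately have Pz: "P * norm z \<ge> 1 / 2" by simp
      hence "norm z \<noteq> 0" by auto
      hence zpos: "norm z > 0" by simp
      have "(1 / norm z) *\<^sub>R (d, - z) \<in> normal_cone (gph \<Sigma>) (ub, F ub + yb)"
        by (rule NC_scale) (use nd zpos in \<open>simp_all add: d_def z_def\<close>)
      hence "((1 / norm z) *\<^sub>R d, - ((1 / norm z) *\<^sub>R z)) \<in> normal_cone (gph \<Sigma>) (ub, F ub + yb)" by simp
      moreover have "norm ((1 / norm z) *\<^sub>R z) = 1" using zpos by simp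
      ultimately have r1: "RS \<le> ereal (norm ((1 / norm z) *\<^sub>R d))"
        unfolding RS_def by (intro Reg_le[OF mS])
      have r2: "norm ((1 / norm z) *\<^sub>R d) \<le> e"
      proof -
        have "norm ((1 / norm z) *\<^sub>R d) = norm d / norm z" using zpos by simp
        also have "\<dots> \<le> e"
        proof -
          have "norm d \<le> (K + 2) * \<delta>" by (rule dn)
          also have "(K + 2) * \<delta> \<le> e / (4 * P)"
            using d2 P by (simp add: le_divide_eq algebra_simps)
          also have "e / (4 * P) \<le> e * norm z"
          proof -
            have X: "e * (1 / 2) \<le> e * (P * norm z)" using Pz e by (intro mult_left_mono) auto
            have "(e * norm z) * (4 * P) = 4 * (e * (P * norm z))" by simp
            hence "e \<le> (e * norm z) * (4 * P)" using X e by linarith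
            thus ?thesis using P by (simp add: pos_divide_le_eq)
          qed
          finally have "norm d \<le> e * norm z" .
          thus ?thesis by (simp only: pos_divide_le_eq[OF zpos])
        qed
        finally show ?thesis .
      qed
      show ?thesis by (rule order_trans[OF r1]) (simp only: ereal_less_eq(3) r2)
    qed
    have le: "RS \<le> 0 + ereal e" if "0 < e" for e using RSe[OF that] by simp
    have "RS \<le> 0" by (rule ereal_le_epsilon2[OF le])
    moreover have "0 \<le> RS" unfolding RS_def by (rule Reg_nonneg)
    ultimately show ?thesis by (rule antisym)
  qed
  have n1: "0 \<le> RQQ" "0 \<le> RCC" "0 \<le> RQ" unfolding RQQ_def RCC_def RQ_def by (simp_all add: Reg_nonneg)
  have m1: "max RCC RQ \<le> RS" using i by simp
  have m2: "RQQ \<le> max RCC RQ" using iii by (simp add: le_max_iff_disj)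
  have m3: "RS = 0 \<and> RCC = 0 \<and> RQ = 0" if "RQQ = 0"
  proof -
    have "RS = 0" by (rule iv[OF that])
    thus ?thesis using i n1 by (simp add: antisym)
  qed
  show ?thesis unfolding RS_def[symmetric] RCC_def[symmetric] RQ_def[symmetric] RQQ_def[symmetric]
    using c1 c2 c3 c4 m1 m2 n1(1) m3 by blast
qed


end
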